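(* Consider a HyperLogLog sketch with $m$ registers after inserting $n$ distinct elements (model and convention in the context), and let $B=\log_2\frac{n}{m}$. Then for every $\Delta\in(0,B)$ and every $j\in[m]$: (i) $\Pr[M[j]<B-\Delta]<\exp(-2^\Delta)<2^{-\Delta}$, and (ii) $\Pr[M[j]>B+\Delta]<2^{-\Delta}$.
   Context: HyperLogLog model: each of $n$ distinct elements $y_i$ is assigned a register index $f(y_i)$ uniform in $[m]$ and a value $\rho_i$ with $\Pr[\rho_i=k]=2^{-k}$, $k=1,2,\dots$ (the position of the first one-bit of a uniformly random hash value), all independent; register $M[j]$ is the maximum of $\rho_i$ over elements with $f(y_i)=j$ (0 if none). Then $\Pr[M[j]\le k]=(1-\frac{1}{m2^k})^n$ for integers $k\ge0$. Convention for this statement: each register $M[j]$ is treated as a real-valued continuous random variable with distribution function $\Pr[M[j]\le t]=\Pr[M[j]<t]=(1-\frac{1}{m2^t})^n$ for real $t$, and $\Pr[M[j]>t]=1-(1-\frac{1}{m2^t})^n$. *)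

theory Defs
  imports "HOL-Probability.Probability"
begin

text \<open>Distribution function of a HyperLogLog register (continuous convention):
  Pr[M[j] \<le> t] = Pr[M[j] < t] = (1 - 1/(m 2^t))^n.\<close>
definition hll_cdf :: "nat \<Rightarrow> nat \<Rightarrow> real \<Rightarrow> real" where
  "hll_cdf m n t = (1 - 1 / (real m * 2 powr t)) ^ n"

end

theory Submission
  imports Defs
begin

lemma strict_bern:
  fixes x :: real
  assumes "0 < x" "x < 1" "n \<ge> 2"
  shows "1 - real n * x < (1 - x) ^ n"
proof -
  obtain k where k: "n = Suc k" "k \<ge> 1" using assms(3) by (cases n) auto
  have b: "1 + real k * (-x) \<le> (1 + (-x)) ^ k"
    by (rule Bernoulli_inequality) (use assms in auto)
  have "1 - real n * x < (1 - real k * x) * (1 - x)"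
    using k assms by (simp add: algebra_simps)
  also have "\<dots> \<le> (1 - x) ^ k * (1 - x)"
    using b assms by (intro mult_right_mono) auto
  also have "\<dots> = (1 - x) ^ n" using k by simp
  finally show ?thesis .
qed

lemma pow_lt_exp:
  fixes x :: real
  assumes "0 < x" "x < 1" "n \<ge> 1"
  shows "(1 - x) ^ n < exp (- (real n * x))"
proof -
  have "1 - x < exp (-x)" using exp_minus_greater assms by auto
  then have "(1 - x) ^ n < exp (-x) ^ n"
    using assms by (intro power_strict_mono) auto
  also have "\<dots> = exp (- (real n * x))"
    by (simp add: exp_of_nat_mult[symmetric])
  finally show ?thesis .
qed

theorem lemma3p3:
  fixes P :: "'a measure" and Mreg :: "nat \<Rightarrow> 'a \<Rightarrow> real"
    and m n :: nat and \<Delta> :: real and j :: nat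
  assumes "prob_space P"
    and "m \<ge> 1"
    and meas: "\<And>i. i < m \<Longrightarrow> Mreg i \<in> borel_measurable P"
    and cdf_le: "\<And>i t. i < m \<Longrightarrow> t \<ge> 0 \<Longrightarrow>
               measure P {x \<in> space P. Mreg i x \<le> t} = hll_cdf m n t"
    and cdf_lt: "\<And>i t. i < m \<Longrightarrow> t \<ge> 0 \<Longrightarrow>
               measure P {x \<in> space P. Mreg i x < t} = hll_cdf m n t"
    and "0 < \<Delta>" and "\<Delta> < log 2 (real n / real m)"
    and "j < m"
  shows "measure P {x \<in> space P. Mreg j x < log 2 (real n / real m) - \<Delta>} < exp (- (2 powr \<Delta>))
         \<and> exp (- (2 powr \<Delta>)) < 2 powr (- \<Delta>)
         \<and> measure P {x \<in> space P. Mreg j x > log 2 (real n / real m) + \<Delta>} < 2 powr (- \<Delta>)"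
proof -
  define B where "B = log 2 (real n / real m)"
  have mpos: "real m > 0" using assms(2) by simp
  have "0 < B" using assms B_def by linarith
  have "n \<noteq> 0"
  proof
    assume "n = 0" then have "B = 0" unfolding B_def by (simp add: log_def)
    then show False using \<open>0 < B\<close> by simp
  qed
  then have "real n / real m > 0" using mpos by simp
  then have "real n / real m > 1" using \<open>0 < B\<close> unfolding B_def
    by (simp add: zero_less_log_cancel_iff)
  then have nm: "real n > real m" using mpos by (simp add: field_simps)
  have n2: "n \<ge> 2" using nm assms(2) by linarith
  have npos: "real n > 0" using n2 by simp
  have pB: "2 powr B = real n / real m" unfolding B_def using npos mpos by simp
  have pD: "2 powr \<Delta> < real n / real m"
    using assms(7) pB unfolding B_def[symmetric]
    by (metis powr_less_mono one_less_numeral_iff semiring_norm(76))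
  have pDpos: "2 powr \<Delta> > 0" by simp
  have pD1: "2 powr \<Delta> > 1" using assms(6) by simp
  have t0: "B - \<Delta> \<ge> 0" using assms(7) B_def by simp
  have e1: "real m * 2 powr (B - \<Delta>) = real n / 2 powr \<Delta>"
    using mpos by (simp add: powr_diff pB)
  define x where "x = 2 powr \<Delta> / real n"
  have x0: "0 < x" "x < 1"
  proof -
    have "real n / real m \<le> real n" using assms(2) npos by (simp add: divide_le_eq)
    then show "0 < x" "x < 1" unfolding x_def using npos pD by auto
  qed
  have "measure P {x \<in> space P. Mreg j x < B - \<Delta>} = (1 - x) ^ n"
    using cdf_lt[OF assms(8) t0] e1 unfolding hll_cdf_def x_def by simp
  also have "\<dots> < exp (- (real n * x))" using pow_lt_exp[OF x0] n2 by simp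
  also have "real n * x = 2 powr \<Delta>" unfolding x_def using npos by simp
  finally have i: "measure P {x \<in> space P. Mreg j x < B - \<Delta>} < exp (- (2 powr \<Delta>))" .
  have ii: "exp (- (2 powr \<Delta>)) < 2 powr (- \<Delta>)"
  proof -
    have "2 powr \<Delta> < exp (2 powr \<Delta>)" by (rule exp_gt_self)
    then have "1 / exp (2 powr \<Delta>) < 1 / 2 powr \<Delta>"
      using pDpos by (intro divide_strict_left_mono) auto
    then show ?thesis by (simp add: exp_minus powr_minus inverse_eq_divide)
  qed
  have s0: "B + \<Delta> \<ge> 0" using t0 assms(6) by simp
  interpret prob_space P by fact
  have ev: "{x \<in> space P. Mreg j x \<le> B + \<Delta>} \<in> sets P"
    using meas[OF assms(8)] by measurable
  have eq: "{x \<in> space P. Mreg j x > B + \<Delta>} = space P - {x \<in> space P. Mreg j x \<le> B + \<Delta>}"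
    by auto
  define y where "y = 1 / (real n * 2 powr \<Delta>)"
  have e2: "real m * 2 powr (B + \<Delta>) = real n * 2 powr \<Delta>"
    using mpos by (simp add: powr_add pB)
  have y0: "0 < y" "y < 1"
  proof -
    have "1 < real n * 2 powr \<Delta>" using n2 pD1
      by (metis less_1_mult numeral_le_real_of_nat_iff one_less_numeral_iff order.strict_trans2 semiring_norm(76) of_nat_le_iff)
    then show "0 < y" "y < 1" unfolding y_def by auto
  qed
  have "measure P {x \<in> space P. Mreg j x > B + \<Delta>} = 1 - (1 - y) ^ n"
    unfolding eq prob_compl[OF ev] cdf_le[OF assms(8) s0] hll_cdf_def e2 y_def by simp
  also have "\<dots> < real n * y" using strict_bern[OF y0 n2] by simp
  also have "real n * y = 2 powr (- \<Delta>)" unfolding y_def using npos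
    by (simp add: powr_minus divide_simps)
  finally have iii: "measure P {x \<in> space P. Mreg j x > B + \<Delta>} < 2 powr (- \<Delta>)" .
  show ?thesis using i ii iii unfolding B_def by blast
qed

end
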